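(* Under the setting and assumptions of the first-method model (F satisfying (A1)–(A3); $y_{kj}=\beta_k+sx_j+\delta_{kj}$, $k=0,\dots,d$, with $x_j=-\log\varepsilon_j$ for a strictly decreasing sequence of radii $\varepsilon_j>0$; zero-mean errors with finite positive variances whose covariance matrices $Q_n$ satisfy $0<\inf_n\nu_{\min}(Q_n)\le\sup_n\nu_{\max}(Q_n)=:\nu^*<\infty$), the least squares estimator $\hat\beta^{(n)}$ of $\beta=(\beta_0,\dots,\beta_d,s)^\top$ satisfies, for every $\varepsilon>0$ and $n\ge2$, $$P(|\hat\beta^{(n)}-\beta|>\varepsilon)\le\frac{4\nu^*}{\varepsilon^2(d+1)n}\big(1+\bar x_n^2+\widetilde S_n^2\big)\Big(\frac1{\widetilde S_n^2}+(d+1)\Big(1+\frac{\bar x_n^2}{\widetilde S_n^2}\Big)\Big)^2.$$ Moreover, if there are constants $\gamma,\mu\ge0$ with $\widetilde S_n^2=\Theta(n^\gamma)$ and $\bar x_n=O(n^{\mu/2})$ as $n\to\infty$, and $\alpha:=1-\max\{\gamma,\mu\}-2\max\{0,\mu-\gamma\}>0$, then $P(|\hat\beta^{(n)}-\beta|>\varepsilon)=O(n^{-\alpha})$ for every $\varepsilon>0$.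
   Context: $F_\varepsilon$ is the $\varepsilon$-parallel set of $F$; $C_k(F_\varepsilon)$ its $k$-th total curvature (intrinsic volume); $s$ is the Minkowski dimension of $F$. (A1): curvature measures of $F_\varepsilon$ well defined for a.e. $\varepsilon$; (A2): each $C_k(F_\varepsilon)$ has constant strict sign in $\varepsilon$; (A3): $\mathcal C_k(F)=\operatorname{ess\,lim}_{\varepsilon\searrow0}\varepsilon^{s-k}C_k(F_\varepsilon)$ exists for all $k$, and $\beta_k=\log|\mathcal C_k(F)|$. $\bar x_n=\frac1n\sum_{i\le n}x_i$, $\widetilde S_n^2=\frac1n\sum_{i\le n}(x_i-\bar x_n)^2$. $Q_n$ is the covariance matrix of $(\delta_{01},\dots,\delta_{d1},\dots,\delta_{0n},\dots,\delta_{dn})$. $\hat\beta^{(n)}$ minimizes $\sum_{k=0}^d\sum_{j=1}^n(y_{kj}-\beta_k-sx_j)^2$. $f=\Theta(g)$ means $c_1|g|\le|f|\le c_2|g|$ eventually for constants $c_1,c_2>0$. *)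

theory Defs
  imports "HOL-Probability.Probability" "HOL-Library.Landau_Symbols"
begin

text \<open>Square real matrices of size N are represented as functions nat => nat => real,
  only the entries with indices below N being relevant.\<close>

definition is_eigenvalue :: "nat \<Rightarrow> (nat \<Rightarrow> nat \<Rightarrow> real) \<Rightarrow> real \<Rightarrow> bool" where
  "is_eigenvalue N A lam \<longleftrightarrow>
     (\<exists>v::nat \<Rightarrow> real. (\<exists>i<N. v i \<noteq> 0) \<and> (\<forall>i<N. (\<Sum>j<N. A i j * v j) = lam * v i))"

definition nu_min :: "nat \<Rightarrow> (nat \<Rightarrow> nat \<Rightarrow> real) \<Rightarrow> real" where
  "nu_min N A = Min {lam. is_eigenvalue N A lam}"

definition nu_max :: "nat \<Rightarrow> (nat \<Rightarrow> nat \<Rightarrow> real) \<Rightarrow> real" where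
  "nu_max N A = Max {lam. is_eigenvalue N A lam}"

definition covar :: "'a measure \<Rightarrow> ('a \<Rightarrow> real) \<Rightarrow> ('a \<Rightarrow> real) \<Rightarrow> real" where
  "covar M X Y = (\<integral>\<omega>. (X \<omega> - (\<integral>\<eta>. X \<eta> \<partial>M)) * (Y \<omega> - (\<integral>\<eta>. Y \<eta> \<partial>M)) \<partial>M)"

text \<open>Covariance matrix Q_n of the vector
  (delta_01, ..., delta_d1, ..., delta_0n, ..., delta_dn): position p corresponds to
  k = p mod (d+1), j = p div (d+1) + 1. It has size (d+1)*n.\<close>
definition cov_matrix :: "'a measure \<Rightarrow> nat \<Rightarrow> (nat \<Rightarrow> nat \<Rightarrow> 'a \<Rightarrow> real) \<Rightarrow> nat \<Rightarrow> nat \<Rightarrow> real" where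
  "cov_matrix M d \<delta> p q =
     covar M (\<delta> (p mod (d+1)) (p div (d+1) + 1)) (\<delta> (q mod (d+1)) (q div (d+1) + 1))"

definition xbar :: "(nat \<Rightarrow> real) \<Rightarrow> nat \<Rightarrow> real" where
  "xbar x n = (1 / real n) * (\<Sum>i=1..n. x i)"

definition S2 :: "(nat \<Rightarrow> real) \<Rightarrow> nat \<Rightarrow> real" where
  "S2 x n = (1 / real n) * (\<Sum>i=1..n. (x i - xbar x n)^2)"

text \<open>Residual sum of squares of a parameter vector v = (beta_0,...,beta_d, s),
  stored as v 0, ..., v d, v (d+1).\<close>
definition RSS :: "nat \<Rightarrow> (nat \<Rightarrow> real) \<Rightarrow> (nat \<Rightarrow> nat \<Rightarrow> real) \<Rightarrow> nat \<Rightarrow> (nat \<Rightarrow> real) \<Rightarrow> real" where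
  "RSS d x y n v = (\<Sum>k=0..d. \<Sum>j=1..n. (y k j - v k - v (d+1) * x j)^2)"

definition lse :: "nat \<Rightarrow> (nat \<Rightarrow> real) \<Rightarrow> (nat \<Rightarrow> nat \<Rightarrow> real) \<Rightarrow> nat \<Rightarrow> nat \<Rightarrow> real" where
  "lse d x y n = (THE v. (\<forall>i>d+1. v i = 0) \<and> (\<forall>w. RSS d x y n v \<le> RSS d x y n w))"

definition pdist :: "nat \<Rightarrow> (nat \<Rightarrow> real) \<Rightarrow> (nat \<Rightarrow> real) \<Rightarrow> real" where
  "pdist d v w = sqrt (\<Sum>i=0..d+1. (v i - w i)^2)"

end

theory Submission
  imports Defs "Jordan_Normal_Form.Char_Poly"
begin



lemma finite_eig: "finite {lam. is_eigenvalue N A lam}"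
proof -
  define B where "B = mat N N (\<lambda>(i,j). A i j)"
  have Bc: "B \<in> carrier_mat N N" by (simp add: B_def)
  have "{lam. is_eigenvalue N A lam} \<subseteq> {k. poly (char_poly B) k = 0}"
  proof
    fix lam assume "lam \<in> {lam. is_eigenvalue N A lam}"
    then obtain v where v: "\<exists>i<N. v i \<noteq> 0" "\<forall>i<N. (\<Sum>j<N. A i j * v j) = lam * v i"
      unfolding is_eigenvalue_def by auto
    define w where "w = vec N v"
    have "eigenvector B w lam"
      unfolding eigenvector_def
    proof (intro conjI)
      show "w \<in> carrier_vec (dim_row B)" by (simp add: w_def B_def)
      show "w \<noteq> 0\<^sub>v (dim_row B)" using v(1) by (auto simp: w_def B_def vec_eq_iff)
      show "B *\<^sub>v w = lam \<cdot>\<^sub>v w"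
        using v(2) by (auto simp: w_def B_def vec_eq_iff mult_mat_vec_def scalar_prod_def atLeast0LessThan
            intro!: sum.reindex_cong[of id] )
    qed
    then have "eigenvalue B lam" by (auto simp: eigenvalue_def)
    then show "lam \<in> {k. poly (char_poly B) k = 0}" using eigenvalue_root_char_poly[OF Bc] by simp
  qed
  moreover have "char_poly B \<noteq> 0" using degree_monic_char_poly[OF Bc] by auto
  ultimately show ?thesis using poly_roots_finite finite_subset by blast
qed

lemma compact_box:
  "compact (Pi UNIV (\<lambda>i. if i < (N::nat) then {-1..1::real} else {0}))"
proof -
  have "compactin (product_topology (\<lambda>i. euclidean) UNIV)
          (PiE UNIV (\<lambda>i. if i < (N::nat) then {-1..1::real} else {0}))"
    by (subst compactin_PiE) auto
  then show ?thesis by (simp add: euclidean_product_topology PiE_UNIV_domain)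
qed

lemma cont_qf: "continuous_on UNIV (\<lambda>v::nat\<Rightarrow>real. \<Sum>i<N. \<Sum>j<N. v i * A i j * v j)"
  by (intro continuous_intros continuous_on_product_coordinates)

lemma cont_nsq: "continuous_on UNIV (\<lambda>v::nat\<Rightarrow>real. \<Sum>i<N. (v i)^2)"
  by (intro continuous_intros continuous_on_product_coordinates)



lemma qf_expand:
  fixes A :: "nat \<Rightarrow> nat \<Rightarrow> real"
  assumes sym: "\<forall>i<N. \<forall>j<N. A i j = A j i"
  shows "(\<Sum>i<N. \<Sum>j<N. (u i + t * r i) * A i j * (u j + t * r j))
     = (\<Sum>i<N. \<Sum>j<N. u i * A i j * u j) + 2 * t * (\<Sum>i<N. r i * (\<Sum>j<N. A i j * u j))
       + t^2 * (\<Sum>i<N. \<Sum>j<N. r i * A i j * r j)"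
proof -
  have e: "(u i + t * r i) * A i j * (u j + t * r j) = u i * A i j * u j + t * (r i * A i j * u j)
     + t * (u i * A i j * r j) + t^2 * (r i * A i j * r j)" for i j
    by (simp add: algebra_simps power2_eq_square)
  have sw: "(\<Sum>i<N. \<Sum>j<N. u i * A i j * r j) = (\<Sum>i<N. \<Sum>j<N. r i * A i j * u j)"
  proof -
    have "(\<Sum>i<N. \<Sum>j<N. u i * A i j * r j) = (\<Sum>j<N. \<Sum>i<N. u i * A i j * r j)"
      by (rule sum.swap)
    also have "\<dots> = (\<Sum>j<N. \<Sum>i<N. r j * A j i * u i)"
      using sym by (intro sum.cong refl) (auto simp: algebra_simps)
    finally show ?thesis .
  qed
  have "(\<Sum>i<N. \<Sum>j<N. (u i + t * r i) * A i j * (u j + t * r j))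
      = (\<Sum>i<N. \<Sum>j<N. u i * A i j * u j) + t * (\<Sum>i<N. \<Sum>j<N. r i * A i j * u j)
        + t * (\<Sum>i<N. \<Sum>j<N. u i * A i j * r j) + t^2 * (\<Sum>i<N. \<Sum>j<N. r i * A i j * r j)"
    by (simp add: e sum.distrib sum_distrib_left)
  note main = this
  have X: "(\<Sum>i<N. \<Sum>j<N. r i * A i j * u j) = (\<Sum>i<N. r i * (\<Sum>j<N. A i j * u j))"
    by (simp add: sum_distrib_left mult.assoc)
  show ?thesis unfolding main sw X by (simp add: algebra_simps)
qed

lemma nsq_expand:
  fixes u r :: "nat \<Rightarrow> real"
  shows "(\<Sum>i<N. (u i + t * r i)^2) = (\<Sum>i<N. (u i)^2) + 2 * t * (\<Sum>i<N. u i * r i) + t^2 * (\<Sum>i<N. (r i)^2)"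
proof -
  have "(u i + t * r i)^2 = (u i)^2 + 2 * t * (u i * r i) + t^2 * (r i)^2" for i
    by (simp add: algebra_simps power2_eq_square)
  then show ?thesis by (simp add: sum.distrib sum_distrib_left)
qed

lemma rayleigh:
  fixes A :: "nat \<Rightarrow> nat \<Rightarrow> real"
  assumes N: "0 < N" and sym: "\<forall>i<N. \<forall>j<N. A i j = A j i"
  shows "\<exists>lam. is_eigenvalue N A lam \<and>
           (\<forall>v. (\<Sum>i<N. \<Sum>j<N. v i * A i j * v j) \<le> lam * (\<Sum>i<N. (v i)^2))"
proof -
  define qf where "qf v = (\<Sum>i<N. \<Sum>j<N. v i * A i j * v j)" for v :: "nat \<Rightarrow> real"
  define nsq where "nsq v = (\<Sum>i<N. (v i)^2)" for v :: "nat \<Rightarrow> real"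
  define S where "S = Pi UNIV (\<lambda>i. if i < N then {-1..1::real} else {0}) \<inter> {v. nsq v = 1}"
  have "closed {v::nat\<Rightarrow>real. nsq v = 1}" unfolding nsq_def
    by (intro closed_Collect_eq cont_nsq continuous_on_const)
  then have cS: "compact S" unfolding S_def
    by (intro compact_Int_closed compact_box)
  have "(\<Sum>i<N. (if i = 0 then 1 else 0 :: real)^2) = (\<Sum>i<N. (if i = 0 then 1 else 0 :: real))"
    by (intro sum.cong) auto
  also have "\<dots> = 1" using N by simp
  finally have "(\<lambda>i. if i = 0 then 1 else 0) \<in> S" using N
    by (auto simp: S_def nsq_def)
  then have ne: "S \<noteq> {}" by auto
  obtain u where uS: "u \<in> S" and umax: "\<forall>y\<in>S. qf y \<le> qf u"
    using continuous_attains_sup[OF cS ne, of qf] cont_qf[where N=N and A=A, unfolded qf_def[symmetric]]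
      continuous_on_subset by blast
  define lam where "lam = qf u"
  have nsq_nn: "nsq v \<ge> 0" for v by (simp add: nsq_def sum_nonneg)
  have bound: "qf v \<le> lam * nsq v" for v
  proof (cases "nsq v = 0")
    case True
    then have "\<forall>i\<in>{..<N}. (v i)^2 = 0" unfolding nsq_def
      by (subst sum_nonneg_eq_0_iff[symmetric]) auto
    then have "qf v = 0" by (simp add: qf_def)
    then show ?thesis using True by simp
  next
    case False
    then have pos: "nsq v > 0" using nsq_nn[of v] by linarith
    define r where "r = sqrt (nsq v)"
    have r: "r > 0" "r^2 = nsq v" using pos by (auto simp: r_def)
    define w where "w i = (if i < N then v i / r else 0)" for i
    have sq_le: "(v i)^2 \<le> nsq v" if "i < N" for i
      unfolding nsq_def using that by (intro member_le_sum) auto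
    have "w \<in> S"
    proof -
      have "\<bar>w i\<bar> \<le> 1" if "i < N" for i
      proof -
        have "(w i)^2 = (v i)^2 / r^2" using that by (simp add: w_def power_divide)
        also have "\<dots> \<le> 1" using sq_le[OF that] r pos by (simp add: divide_le_eq)
        finally show ?thesis by (simp add: abs_square_le_1)
      qed
      moreover have "nsq w = 1"
      proof -
        have "nsq w = (\<Sum>i<N. (v i)^2 / r^2)" by (simp add: nsq_def w_def power_divide)
        also have "\<dots> = nsq v / r^2" by (simp add: nsq_def sum_divide_distrib)
        finally show ?thesis using r pos by simp
      qed
      ultimately have "\<forall>i<N. -1 \<le> w i \<and> w i \<le> 1" "nsq w = 1" by (auto simp: abs_le_iff)
      then show ?thesis by (auto simp: S_def w_def)
    qed
    then have "qf w \<le> lam" using umax by (simp add: lam_def)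
    moreover have "qf w = qf v / r^2"
    proof -
      have "qf w = (\<Sum>i<N. \<Sum>j<N. (v i * A i j * v j) / r^2)"
        by (simp add: qf_def w_def power2_eq_square)
      also have "\<dots> = qf v / r^2" by (simp add: qf_def sum_divide_distrib)
      finally show ?thesis .
    qed
    ultimately have "qf v / r^2 \<le> lam" by simp
    then show ?thesis using r pos by (simp add: divide_le_eq mult.commute)
  qed
  define res where "res i = (\<Sum>j<N. A i j * u j) - lam * u i" for i
  have nu: "nsq u = 1" using uS by (simp add: S_def)
  have key: "2 * t * nsq res + t^2 * (qf res - lam * nsq res) \<le> 0" for t
  proof -
    have "qf (\<lambda>i. u i + t * res i) \<le> lam * nsq (\<lambda>i. u i + t * res i)" by (rule bound)
    also have "nsq (\<lambda>i. u i + t * res i) = 1 + 2 * t * (\<Sum>i<N. u i * res i) + t^2 * nsq res"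
      using nsq_expand[where N=N and u=u and t=t and r=res] nu by (simp add: nsq_def)
    finally have "lam + 2 * t * (\<Sum>i<N. res i * (\<Sum>j<N. A i j * u j)) + t^2 * qf res
        \<le> lam * (1 + 2 * t * (\<Sum>i<N. u i * res i) + t^2 * nsq res)"
      using qf_expand[OF sym, where u=u and t=t and r=res] by (simp add: qf_def lam_def)
    moreover have "(\<Sum>i<N. res i * (\<Sum>j<N. A i j * u j)) - lam * (\<Sum>i<N. u i * res i) = nsq res"
    proof -
      have "(\<Sum>i<N. res i * (\<Sum>j<N. A i j * u j)) - lam * (\<Sum>i<N. u i * res i)
          = (\<Sum>i<N. res i * ((\<Sum>j<N. A i j * u j) - lam * u i))"
        by (simp add: sum_distrib_left sum_subtractf algebra_simps)
      also have "\<dots> = nsq res" by (simp add: nsq_def res_def power2_eq_square)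
      finally show ?thesis .
    qed
    ultimately show ?thesis by (simp add: algebra_simps)
  qed
  have "nsq res = 0"
  proof (rule ccontr)
    assume "nsq res \<noteq> 0"
    then have R: "nsq res > 0" using nsq_nn[of res] by linarith
    define K where "K = qf res - lam * nsq res"
    define t where "t = nsq res / (\<bar>K\<bar> + 1)"
    have t: "t > 0" using R by (simp add: t_def)
    have "2 * t * nsq res + t^2 * K \<le> 0" using key[of t] by (simp add: K_def)
    then have "t * (2 * nsq res + t * K) \<le> 0" by (simp add: power2_eq_square algebra_simps)
    then have "2 * nsq res + t * K \<le> 0" using t by (simp add: mult_le_0_iff)
    moreover have "t * \<bar>K\<bar> < nsq res"
    proof -
      have "t * \<bar>K\<bar> = nsq res * (\<bar>K\<bar> / (\<bar>K\<bar> + 1))" by (simp add: t_def)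
      also have "\<dots> < nsq res * 1" using R by (intro mult_strict_left_mono) auto
      finally show ?thesis by simp
    qed
    moreover have "- (t * \<bar>K\<bar>) \<le> t * K" using t
      by (smt (verit) abs_ge_minus_self mult_minus_right mult_left_mono)
    ultimately show False using R by linarith
  qed
  then have "\<forall>i\<in>{..<N}. (res i)^2 = 0" unfolding nsq_def
    by (subst sum_nonneg_eq_0_iff[symmetric]) auto
  then have eig: "\<forall>i<N. (\<Sum>j<N. A i j * u j) = lam * u i" by (auto simp: res_def)
  have "\<exists>i<N. u i \<noteq> 0"
  proof (rule ccontr)
    assume "\<not> ?thesis"
    then have "nsq u = 0" by (simp add: nsq_def)
    then show False using nu by simp
  qed
  then have "is_eigenvalue N A lam" using eig by (auto simp: is_eigenvalue_def)
  then show ?thesis using bound by (auto simp: qf_def nsq_def)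
qed



lemma qf_le_numax:
  fixes A :: "nat \<Rightarrow> nat \<Rightarrow> real"
  assumes N: "0 < N" and sym: "\<forall>i<N. \<forall>j<N. A i j = A j i"
  shows "(\<Sum>i<N. \<Sum>j<N. v i * A i j * v j) \<le> nu_max N A * (\<Sum>i<N. (v i)^2)"
proof -
  obtain lam where l: "is_eigenvalue N A lam"
    "\<forall>v. (\<Sum>i<N. \<Sum>j<N. v i * A i j * v j) \<le> lam * (\<Sum>i<N. (v i)^2)"
    using rayleigh[OF N sym] by blast
  have "lam \<le> nu_max N A" unfolding nu_max_def using l(1) finite_eig by (intro Max_ge) auto
  moreover have "(\<Sum>i<N. (v i)^2) \<ge> 0" by (simp add: sum_nonneg)
  ultimately show ?thesis using l(2)[rule_format, of v] by (meson mult_right_mono order.trans)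
qed

lemma reindex_sum:
  fixes d n :: nat
  shows "(\<Sum>k\<le>d. \<Sum>j\<in>{1..n}. f k j) = (\<Sum>p<(d+1)*n. f (p mod (d+1)) (p div (d+1) + 1))"
proof -
  define h where "h p = (p mod (d+1), p div (d+1) + 1)" for p
  have bij: "bij_betw h {..<(d+1)*n} ({..d} \<times> {1..n})"
  proof (rule bij_betw_byWitness[where f'="\<lambda>(k,j). (j - 1) * (d+1) + k"])
    show "\<forall>a\<in>{..<(d+1)*n}. (\<lambda>(k,j). (j - 1) * (d+1) + k) (h a) = a"
    proof
      fix a
      have "(a div (d+1) + 1 - 1) * (d+1) + a mod (d+1) = a" using div_mult_mod_eq[of a "d+1"] by simp
      then show "(\<lambda>(k,j). (j - 1) * (d+1) + k) (h a) = a" by (simp add: h_def)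
    qed
    show "\<forall>a'\<in>{..d} \<times> {1..n}. h ((\<lambda>(k,j). (j - 1) * (d+1) + k) a') = a'"
    proof
      fix a' assume "a' \<in> {..d} \<times> {1..n}"
      then obtain k j where kj: "k \<le> d" "1 \<le> j" "j \<le> n" and a': "a' = (k,j)" by auto
      have k1: "k < d+1" using kj by simp
      have m: "((j - 1) * (d+1) + k) mod (d+1) = k"
        by (subst add.commute, subst mod_mult_self1) (rule mod_less[OF k1])
      have q: "((j - 1) * (d+1) + k) div (d+1) = j - 1"
        by (subst add.commute, subst div_mult_self1) (use k1 in auto)
      show "h ((\<lambda>(k,j). (j - 1) * (d+1) + k) a') = a'" unfolding a' 
        unfolding h_def using m q kj by simp
    qed
    show "h ` {..<(d+1)*n} \<subseteq> {..d} \<times> {1..n}"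
    proof
      fix q assume "q \<in> h ` {..<(d+1)*n}"
      then obtain p where p: "p < (d+1)*n" "q = h p" by auto
      have "p div (d+1) < n" using p(1) by (simp add: less_mult_imp_div_less mult.commute)
      moreover have "p mod (d+1) \<le> d" using less_Suc_eq_le by auto
      ultimately show "q \<in> {..d} \<times> {1..n}" using p by (auto simp: h_def)
    qed
    show "(\<lambda>(k,j). (j - 1) * (d+1) + k) ` ({..d} \<times> {1..n}) \<subseteq> {..<(d+1)*n}"
    proof
      fix q assume "q \<in> (\<lambda>(k,j). (j - 1) * (d+1) + k) ` ({..d} \<times> {1..n})"
      then obtain k j where "k \<le> d" "1 \<le> j" "j \<le> n" and q: "q = (j - 1) * (d+1) + k" by auto
      then have "(j - 1) * (d+1) + k < (j - 1) * (d+1) + (d+1)" by simp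
      also have "\<dots> = j * (d+1)" using \<open>1 \<le> j\<close> by (cases j) auto
      also have "\<dots> \<le> n * (d+1)" using \<open>j \<le> n\<close> by (rule mult_right_mono) simp
      finally show "q \<in> {..<(d+1)*n}" using q by (simp add: mult.commute)
    qed
  qed
  have "(\<Sum>k\<le>d. \<Sum>j\<in>{1..n}. f k j) = (\<Sum>(k,j)\<in>{..d} \<times> {1..n}. f k j)"
    by (simp add: sum.cartesian_product)
  also have "\<dots> = (\<Sum>p<(d+1)*n. (\<lambda>(k,j). f k j) (h p))"
    using sum.reindex_bij_betw[OF bij, of "\<lambda>(k,j). f k j"] by simp
  finally show ?thesis by (simp add: h_def)
qed



lemma int_prod:
  fixes f g :: "'a \<Rightarrow> real"
  assumes "f \<in> borel_measurable M" "g \<in> borel_measurable M"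
    "integrable M (\<lambda>\<omega>. (f \<omega>)^2)" "integrable M (\<lambda>\<omega>. (g \<omega>)^2)"
  shows "integrable M (\<lambda>\<omega>. f \<omega> * g \<omega>)"
proof (rule Bochner_Integration.integrable_bound[where f="\<lambda>\<omega>. (f \<omega>)^2 + (g \<omega>)^2"])
  show "integrable M (\<lambda>\<omega>. (f \<omega>)^2 + (g \<omega>)^2)" using assms by auto
  show "(\<lambda>\<omega>. f \<omega> * g \<omega>) \<in> borel_measurable M" using assms by auto
  show "AE x in M. norm (f x * g x) \<le> norm ((f x)^2 + (g x)^2)"
  proof (rule AE_I2)
    fix x
    have "2 * \<bar>f x * g x\<bar> \<le> (f x)^2 + (g x)^2"
      using sum_squares_bound[of "\<bar>f x\<bar>" "\<bar>g x\<bar>"] by (simp add: abs_mult power2_abs)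
    moreover have "(f x)^2 + (g x)^2 \<ge> 0" by simp
    ultimately show "norm (f x * g x) \<le> norm ((f x)^2 + (g x)^2)" by simp
  qed
qed

lemma core:
  fixes M :: "'a measure" and \<delta> :: "nat \<Rightarrow> nat \<Rightarrow> 'a \<Rightarrow> real" and a :: "nat \<Rightarrow> nat \<Rightarrow> real"
    and d n :: nat
  assumes rv: "\<forall>k\<le>d. \<forall>j\<ge>1. \<delta> k j \<in> borel_measurable M"
    and sq_int: "\<forall>k\<le>d. \<forall>j\<ge>1. integrable M (\<lambda>\<omega>. (\<delta> k j \<omega>)^2)"
    and mean0: "\<forall>k\<le>d. \<forall>j\<ge>1. integrable M (\<delta> k j) \<and> (\<integral>\<omega>. \<delta> k j \<omega> \<partial>M) = 0"
    and n: "n \<ge> 1"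
  shows "integrable M (\<lambda>\<omega>. (\<Sum>k\<le>d. \<Sum>j\<in>{1..n}. a k j * \<delta> k j \<omega>)^2)
    \<and> (\<integral>\<omega>. (\<Sum>k\<le>d. \<Sum>j\<in>{1..n}. a k j * \<delta> k j \<omega>)^2 \<partial>M)
        \<le> nu_max ((d+1)*n) (cov_matrix M d \<delta>) * (\<Sum>k\<le>d. \<Sum>j\<in>{1..n}. (a k j)^2)"
proof -
  define N where "N = (d+1)*n"
  define a' where "a' p = a (p mod (d+1)) (p div (d+1) + 1)" for p
  define e where "e p = \<delta> (p mod (d+1)) (p div (d+1) + 1)" for p
  define Q where "Q = cov_matrix M d \<delta>"
  have N: "N > 0" using n by (simp add: N_def)
  have kd: "p mod (d+1) \<le> d" for p using less_Suc_eq_le by auto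
  have em: "e p \<in> borel_measurable M" for p using rv kd by (simp add: e_def)
  have esq: "integrable M (\<lambda>\<omega>. (e p \<omega>)^2)" for p using sq_int kd by (simp add: e_def)
  have emean: "(\<integral>\<omega>. e p \<omega> \<partial>M) = 0" for p using mean0 kd by (simp add: e_def)
  have eprod: "integrable M (\<lambda>\<omega>. e p \<omega> * e q \<omega>)" for p q
    by (rule int_prod[OF em em esq esq])
  have L: "(\<Sum>k\<le>d. \<Sum>j\<in>{1..n}. a k j * \<delta> k j \<omega>) = (\<Sum>p<N. a' p * e p \<omega>)" for \<omega>
    unfolding N_def a'_def e_def by (rule reindex_sum)
  have sq: "(\<Sum>p<N. a' p * e p \<omega>)^2 = (\<Sum>p<N. \<Sum>q<N. a' p * a' q * (e p \<omega> * e q \<omega>))" for \<omega>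
    by (simp add: power2_eq_square sum_product algebra_simps)
  have int: "integrable M (\<lambda>\<omega>. \<Sum>p<N. \<Sum>q<N. a' p * a' q * (e p \<omega> * e q \<omega>))"
    by (simp add: integrable_mult_right eprod)
  have "(\<integral>\<omega>. (\<Sum>p<N. \<Sum>q<N. a' p * a' q * (e p \<omega> * e q \<omega>)) \<partial>M)
      = (\<Sum>p<N. \<Sum>q<N. a' p * a' q * (\<integral>\<omega>. e p \<omega> * e q \<omega> \<partial>M))"
    by (simp add: integral_sum integrable_sum integrable_mult_right eprod)
  also have "\<dots> = (\<Sum>p<N. \<Sum>q<N. a' p * Q p q * a' q)"
  proof (intro sum.cong refl)
    fix p q
    have "Q p q = covar M (e p) (e q)" unfolding Q_def cov_matrix_def e_def ..
    also have "\<dots> = (\<integral>\<omega>. e p \<omega> * e q \<omega> \<partial>M)" by (simp add: covar_def emean)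
    finally have "Q p q = (\<integral>\<omega>. e p \<omega> * e q \<omega> \<partial>M)" .
    then show "a' p * a' q * (\<integral>\<omega>. e p \<omega> * e q \<omega> \<partial>M) = a' p * Q p q * a' q" by simp
  qed
  also have "\<dots> \<le> nu_max N Q * (\<Sum>p<N. (a' p)^2)"
    by (rule qf_le_numax[OF N]) (simp add: Q_def cov_matrix_def covar_def mult.commute)
  also have "(\<Sum>p<N. (a' p)^2) = (\<Sum>k\<le>d. \<Sum>j\<in>{1..n}. (a k j)^2)"
    unfolding N_def a'_def by (rule reindex_sum[symmetric])
  finally have calc: "(\<integral>\<omega>. (\<Sum>p<N. \<Sum>q<N. a' p * a' q * (e p \<omega> * e q \<omega>)) \<partial>M)
      \<le> nu_max N Q * (\<Sum>k\<le>d. \<Sum>j\<in>{1..n}. (a k j)^2)" .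
  have eqf: "(\<lambda>\<omega>. (\<Sum>k\<le>d. \<Sum>j\<in>{1..n}. a k j * \<delta> k j \<omega>)^2)
     = (\<lambda>\<omega>. \<Sum>p<N. \<Sum>q<N. a' p * a' q * (e p \<omega> * e q \<omega>))"
    by (intro ext) (simp only: L sq)
  show ?thesis unfolding eqf using int calc by (simp only: N_def Q_def)
qed

declare One_nat_def [simp del]


lemma xsums:
  fixes x :: "nat \<Rightarrow> real" and n :: nat
  assumes n: "n \<ge> 1"
  shows "(\<Sum>j\<in>{1..n}. x j) = real n * xbar x n"
    and "(\<Sum>j\<in>{1..n}. (x j - xbar x n)) = 0"
    and "(\<Sum>j\<in>{1..n}. x j * (x j - xbar x n)) = real n * S2 x n"
    and "(\<Sum>j\<in>{1..n}. (x j - xbar x n)^2) = real n * S2 x n"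
proof -
  show 1: "(\<Sum>j\<in>{1..n}. x j) = real n * xbar x n" using n unfolding xbar_def by simp
  have "(\<Sum>j\<in>{1..n}. (x j - xbar x n)) = (\<Sum>j\<in>{1..n}. x j) - real n * xbar x n"
    by (simp add: sum_subtractf)
  then show 2: "(\<Sum>j\<in>{1..n}. (x j - xbar x n)) = 0" using 1 by simp
  show 4: "(\<Sum>j\<in>{1..n}. (x j - xbar x n)^2) = real n * S2 x n" using n unfolding S2_def by simp
  have "(\<Sum>j\<in>{1..n}. x j * (x j - xbar x n)) = (\<Sum>j\<in>{1..n}. (x j - xbar x n)^2 + xbar x n * (x j - xbar x n))"
    by (intro sum.cong) (auto simp: power2_eq_square algebra_simps)
  also have "\<dots> = real n * S2 x n" by (simp add: sum.distrib 4 2 flip: sum_distrib_left)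
  finally show "(\<Sum>j\<in>{1..n}. x j * (x j - xbar x n)) = real n * S2 x n" .
qed

lemma lse_closed:
  fixes x :: "nat \<Rightarrow> real" and y :: "nat \<Rightarrow> nat \<Rightarrow> real" and d n :: nat
  assumes n: "n \<ge> 2" and S: "S2 x n > 0" and x12: "x 1 \<noteq> x 2"
  defines "sh \<equiv> (\<Sum>k\<le>d. \<Sum>j\<in>{1..n}. (x j - xbar x n) * y k j) / (real (d+1) * real n * S2 x n)"
  defines "bh \<equiv> (\<lambda>k. (1 / real n) * (\<Sum>j\<in>{1..n}. y k j) - sh * xbar x n)"
  defines "vh \<equiv> (\<lambda>i. if i \<le> d then bh i else if i = d+1 then sh else 0)"
  shows "lse d x y n = vh"
proof -
  define xb where "xb = xbar x n"
  define S where "S = S2 x n"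
  have n1: "n \<ge> 1" using n by simp
  note xs = xsums[OF n1, of x, folded xb_def S_def]
  define r where "r k j = y k j - vh k - vh (d+1) * x j" for k j
  have N1: "(\<Sum>j\<in>{1..n}. r k j) = 0" if k: "k \<le> d" for k
  proof -
    have "(\<Sum>j\<in>{1..n}. r k j) = (\<Sum>j\<in>{1..n}. y k j) - real n * bh k - sh * (\<Sum>j\<in>{1..n}. x j)"
      using k by (simp add: r_def vh_def sum_subtractf sum_distrib_left)
    also have "\<dots> = 0" using n1 xs(1) unfolding bh_def xb_def by (simp add: algebra_simps)
    finally show ?thesis .
  qed
  have N2: "(\<Sum>k\<le>d. \<Sum>j\<in>{1..n}. r k j * x j) = 0"
  proof -
    have "(\<Sum>j\<in>{1..n}. r k j * x j) = (\<Sum>j\<in>{1..n}. y k j * (x j - xb)) - sh * (real n * S)"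
      if k: "k \<le> d" for k
    proof -
      have "(\<Sum>j\<in>{1..n}. r k j * x j) = (\<Sum>j\<in>{1..n}. r k j * (x j - xb) + xb * r k j)"
        by (intro sum.cong) (auto simp: algebra_simps)
      also have "\<dots> = (\<Sum>j\<in>{1..n}. r k j * (x j - xb)) + xb * (\<Sum>j\<in>{1..n}. r k j)"
        by (simp add: sum.distrib sum_distrib_left)
      finally have "(\<Sum>j\<in>{1..n}. r k j * x j) = (\<Sum>j\<in>{1..n}. r k j * (x j - xb)) + xb * (\<Sum>j\<in>{1..n}. r k j)" .
      also have "\<dots> = (\<Sum>j\<in>{1..n}. r k j * (x j - xb))" using N1[OF k] by simp
      also have "\<dots> = (\<Sum>j\<in>{1..n}. y k j * (x j - xb)) - bh k * (\<Sum>j\<in>{1..n}. (x j - xb))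
          - sh * (\<Sum>j\<in>{1..n}. x j * (x j - xb))"
      proof -
        have "(\<Sum>j\<in>{1..n}. r k j * (x j - xb)) = (\<Sum>j\<in>{1..n}. y k j * (x j - xb) - bh k * (x j - xb) - sh * (x j * (x j - xb)))"
          using k by (intro sum.cong) (auto simp: r_def vh_def algebra_simps)
        also have "\<dots> = (\<Sum>j\<in>{1..n}. y k j * (x j - xb)) - (\<Sum>j\<in>{1..n}. bh k * (x j - xb))
          - (\<Sum>j\<in>{1..n}. sh * (x j * (x j - xb)))"
          by (simp only: sum_subtractf)
        also have "\<dots> = (\<Sum>j\<in>{1..n}. y k j * (x j - xb)) - bh k * (\<Sum>j\<in>{1..n}. (x j - xb))
          - sh * (\<Sum>j\<in>{1..n}. x j * (x j - xb))"
          by (simp only: sum_distrib_left)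
        finally show ?thesis .
      qed
      also have "\<dots> = (\<Sum>j\<in>{1..n}. y k j * (x j - xb)) - sh * (real n * S)"
        using xs by simp
      finally show ?thesis .
    qed
    then have "(\<Sum>k\<le>d. \<Sum>j\<in>{1..n}. r k j * x j)
        = (\<Sum>k\<le>d. \<Sum>j\<in>{1..n}. y k j * (x j - xb)) - real (d+1) * (sh * (real n * S))"
      by (simp add: sum_subtractf)
    also have "\<dots> = 0"
    proof -
      have num: "(\<Sum>k\<le>d. \<Sum>j\<in>{1..n}. (x j - xbar x n) * y k j) = (\<Sum>k\<le>d. \<Sum>j\<in>{1..n}. y k j * (x j - xb))"
        by (intro sum.cong refl) (simp add: xb_def mult.commute)
      have den: "real (d+1) * real n * S \<noteq> 0" using S n1 by (simp add: S_def)
      have "real (d+1) * (sh * (real n * S)) = sh * (real (d+1) * real n * S)" by (simp only: mult_ac)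
      also have "\<dots> = (\<Sum>k\<le>d. \<Sum>j\<in>{1..n}. y k j * (x j - xb))"
        unfolding sh_def num[symmetric] S_def using den[unfolded S_def] by simp
      finally show ?thesis by simp
    qed
    finally show ?thesis .
  qed
  have decomp: "RSS d x y n w = RSS d x y n vh
      + (\<Sum>k\<le>d. \<Sum>j\<in>{1..n}. (vh k - w k + (vh (d+1) - w (d+1)) * x j)^2)" for w
  proof -
    define a where "a k = vh k - w k" for k
    define b where "b = vh (d+1) - w (d+1)"
    have e: "(y k j - w k - w (d+1) * x j)^2 = (r k j)^2 + 2 * (a k * r k j + b * (r k j * x j))
       + (a k + b * x j)^2" for k j
      by (simp add: r_def a_def b_def power2_eq_square algebra_simps)
    have cross: "(\<Sum>k\<le>d. \<Sum>j\<in>{1..n}. a k * r k j + b * (r k j * x j)) = 0"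
    proof -
      have "(\<Sum>k\<le>d. \<Sum>j\<in>{1..n}. a k * r k j + b * (r k j * x j))
          = (\<Sum>k\<le>d. a k * (\<Sum>j\<in>{1..n}. r k j)) + b * (\<Sum>k\<le>d. \<Sum>j\<in>{1..n}. r k j * x j)"
        by (simp add: sum.distrib sum_distrib_left)
      also have "\<dots> = 0" using N1 N2 by simp
      finally show ?thesis .
    qed
    have "RSS d x y n w = (\<Sum>k\<le>d. \<Sum>j\<in>{1..n}. (r k j)^2) + 2 * (\<Sum>k\<le>d. \<Sum>j\<in>{1..n}. a k * r k j + b * (r k j * x j))
       + (\<Sum>k\<le>d. \<Sum>j\<in>{1..n}. (a k + b * x j)^2)"
      by (simp add: RSS_def atLeast0AtMost e sum.distrib sum_distrib_left)
    also have "(\<Sum>k\<le>d. \<Sum>j\<in>{1..n}. (r k j)^2) = RSS d x y n vh"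
      by (simp add: RSS_def atLeast0AtMost r_def)
    finally show ?thesis using cross by (simp add: a_def b_def)
  qed
  have nonneg: "(\<Sum>k\<le>d. \<Sum>j\<in>{1..n}. (vh k - w k + (vh (d+1) - w (d+1)) * x j)^2) \<ge> 0" for w
    by (intro sum_nonneg) auto
  show ?thesis unfolding lse_def
  proof (rule the_equality)
    have "\<forall>i>d+1. vh i = 0" by (simp add: vh_def)
    moreover have "\<forall>w. RSS d x y n vh \<le> RSS d x y n w"
    proof
      fix w show "RSS d x y n vh \<le> RSS d x y n w" using decomp[of w] nonneg[of w] by linarith
    qed
    ultimately show "(\<forall>i>d+1. vh i = 0) \<and> (\<forall>w. RSS d x y n vh \<le> RSS d x y n w)" by blast
  next
    fix w assume w: "(\<forall>i>d+1. w i = 0) \<and> (\<forall>v. RSS d x y n w \<le> RSS d x y n v)"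
    then have "RSS d x y n w \<le> RSS d x y n vh" by blast
    then have z: "(\<Sum>k\<le>d. \<Sum>j\<in>{1..n}. (vh k - w k + (vh (d+1) - w (d+1)) * x j)^2) = 0"
      using decomp[of w] nonneg[of w] by linarith
    have zz: "(vh k - w k + (vh (d+1) - w (d+1)) * x j)^2 = 0" if "k \<le> d" "j \<in> {1..n}" for k j
    proof -
      have "\<forall>k\<in>{..d}. (\<Sum>j\<in>{1..n}. (vh k - w k + (vh (d+1) - w (d+1)) * x j)^2) = 0"
        using z by (subst sum_nonneg_eq_0_iff[symmetric]) (auto intro: sum_nonneg)
      then have "\<forall>j\<in>{1..n}. (vh k - w k + (vh (d+1) - w (d+1)) * x j)^2 = 0"
        using that by (subst sum_nonneg_eq_0_iff[symmetric]) auto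
      then show ?thesis using that by auto
    qed
    have b0: "vh (d+1) - w (d+1) = 0"
    proof -
      have "vh 0 - w 0 + (vh (d+1) - w (d+1)) * x 1 = 0" using zz[of 0 1] n by simp
      moreover have "vh 0 - w 0 + (vh (d+1) - w (d+1)) * x 2 = 0" using zz[of 0 2] n by simp
      ultimately have "(vh (d+1) - w (d+1)) * (x 1 - x 2) = 0" by (simp add: algebra_simps)
      then show ?thesis using x12 by simp
    qed
    have ak: "vh k - w k = 0" if "k \<le> d" for k using zz[of k 1] that n b0 by simp
    show "w = vh"
    proof
      fix i show "w i = vh i"
      proof (cases "i \<le> d")
        case True then show ?thesis using ak by simp
      next
        case False
        then show ?thesis
        proof (cases "i = d+1")
          case True then show ?thesis using b0 by simp
        next
          case False then show ?thesis using w \<open>\<not> i \<le> d\<close> by (simp add: vh_def)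
        qed
      qed
    qed
  qed
qed



lemma err_repr:
  fixes x :: "nat \<Rightarrow> real" and \<beta> :: "nat \<Rightarrow> real" and s :: real and \<delta> :: "nat \<Rightarrow> nat \<Rightarrow> real"
    and d n :: nat
  assumes n: "n \<ge> 2" and S: "S2 x n > 0" and x12: "x 1 \<noteq> x 2" and i: "i \<le> d+1"
  defines "c \<equiv> (\<lambda>i k j. if i = d+1 then (x j - xbar x n) / (real (d+1) * real n * S2 x n)
       else (if k = i then 1 / real n else 0) - xbar x n * ((x j - xbar x n) / (real (d+1) * real n * S2 x n)))"
  shows "lse d x (\<lambda>k j. \<beta> k + s * x j + \<delta> k j) n i
        - (if i \<le> d then \<beta> i else if i = d+1 then s else 0)
      = (\<Sum>k\<le>d. \<Sum>j\<in>{1..n}. c i k j * \<delta> k j)"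
proof -
  define y where "y = (\<lambda>k j. \<beta> k + s * x j + \<delta> k j)"
  define xb where "xb = xbar x n"
  define S' where "S' = S2 x n"
  define den where "den = real (d+1) * real n * S'"
  have n1: "n \<ge> 1" using n by simp
  have den0: "den \<noteq> 0" using S n1 by (simp add: den_def S'_def)
  note xs = xsums[OF n1, of x, folded xb_def S'_def]
  define E where "E = (\<Sum>k\<le>d. \<Sum>j\<in>{1..n}. (x j - xb) * \<delta> k j)"
  define sh where "sh = (\<Sum>k\<le>d. \<Sum>j\<in>{1..n}. (x j - xbar x n) * y k j) / (real (d+1) * real n * S2 x n)"
  define bh where "bh = (\<lambda>k. (1 / real n) * (\<Sum>j\<in>{1..n}. y k j) - sh * xbar x n)"
  have L: "lse d x y n = (\<lambda>i. if i \<le> d then bh i else if i = d+1 then sh else 0)"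
    unfolding sh_def bh_def by (rule lse_closed[OF n S x12])
  have inner: "(\<Sum>j\<in>{1..n}. (x j - xb) * y k j) = s * (real n * S') + (\<Sum>j\<in>{1..n}. (x j - xb) * \<delta> k j)" for k
  proof -
    have "(\<Sum>j\<in>{1..n}. (x j - xb) * y k j) = (\<Sum>j\<in>{1..n}. \<beta> k * (x j - xb) + s * (x j * (x j - xb)) + (x j - xb) * \<delta> k j)"
      by (intro sum.cong refl) (simp add: y_def algebra_simps)
    also have "\<dots> = \<beta> k * (\<Sum>j\<in>{1..n}. (x j - xb)) + s * (\<Sum>j\<in>{1..n}. x j * (x j - xb)) + (\<Sum>j\<in>{1..n}. (x j - xb) * \<delta> k j)"
      by (simp only: sum.distrib sum_distrib_left)
    finally show ?thesis using xs by simp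
  qed
  have sh: "sh = s + E / den"
  proof -
    have "(\<Sum>k\<le>d. \<Sum>j\<in>{1..n}. (x j - xbar x n) * y k j) = real (d+1) * (s * (real n * S')) + E"
      unfolding xb_def[symmetric] inner by (simp add: sum.distrib E_def)
    then have "sh = (real (d+1) * (s * (real n * S')) + E) / den" by (simp add: sh_def den_def S'_def)
    also have "\<dots> = s + E / den" using den0 by (simp add: den_def field_simps)
    finally show ?thesis .
  qed
  have bh: "bh k = \<beta> k + (1 / real n) * (\<Sum>j\<in>{1..n}. \<delta> k j) - (E / den) * xb" for k
  proof -
    have "(\<Sum>j\<in>{1..n}. y k j) = real n * \<beta> k + s * (real n * xb) + (\<Sum>j\<in>{1..n}. \<delta> k j)"
      using xs(1) by (simp add: y_def sum.distrib sum_distrib_left[symmetric])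
    then show ?thesis using n1 by (simp add: bh_def sh xb_def[symmetric] field_simps)
  qed
  have Ec: "E / den = (\<Sum>k\<le>d. \<Sum>j\<in>{1..n}. ((x j - xb) / den) * \<delta> k j)"
    by (simp add: E_def sum_divide_distrib)
  show ?thesis
  proof (cases "i = d+1")
    case True
    have "(\<Sum>k\<le>d. \<Sum>j\<in>{1..n}. c i k j * \<delta> k j) = E / den"
      unfolding Ec using True by (simp add: c_def xb_def den_def S'_def)
    then show ?thesis using True by (simp add: y_def[symmetric] L sh)
  next
    case False
    then have id: "i \<le> d" using i by simp
    have "(\<Sum>k\<le>d. \<Sum>j\<in>{1..n}. c i k j * \<delta> k j)
        = (\<Sum>k\<le>d. \<Sum>j\<in>{1..n}. (if k = i then 1 / real n else 0) * \<delta> k j)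
          - xb * (\<Sum>k\<le>d. \<Sum>j\<in>{1..n}. ((x j - xb) / den) * \<delta> k j)"
      using False by (simp add: c_def xb_def den_def S'_def algebra_simps sum_subtractf sum_distrib_left)
    also have "(\<Sum>k\<le>d. \<Sum>j\<in>{1..n}. (if k = i then 1 / real n else 0) * \<delta> k j)
        = (1 / real n) * (\<Sum>j\<in>{1..n}. \<delta> i j)"
    proof -
      have "(\<Sum>k\<le>d. \<Sum>j\<in>{1..n}. (if k = i then 1 / real n else 0) * \<delta> k j)
          = (\<Sum>k\<le>d. if k = i then (1 / real n) * (\<Sum>j\<in>{1..n}. \<delta> i j) else 0)"
        by (intro sum.cong refl) (auto simp: sum_distrib_left)
      also have "\<dots> = (1 / real n) * (\<Sum>j\<in>{1..n}. \<delta> i j)" using id by simp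
      finally show ?thesis .
    qed
    finally have C: "(\<Sum>k\<le>d. \<Sum>j\<in>{1..n}. c i k j * \<delta> k j)
      = (1 / real n) * (\<Sum>j\<in>{1..n}. \<delta> i j) - xb * (\<Sum>k\<le>d. \<Sum>j\<in>{1..n}. ((x j - xb) / den) * \<delta> k j)" .
    have Li: "lse d x (\<lambda>k j. \<beta> k + s * x j + \<delta> k j) n i = bh i" using L[unfolded y_def] id by simp
    show ?thesis unfolding C Ec[symmetric] Li bh using id by (simp add: algebra_simps)
  qed
qed



lemma coef_bound:
  fixes x :: "nat \<Rightarrow> real" and d n :: nat
  assumes n1: "n \<ge> 1" and S: "S2 x n > 0"
  defines "c \<equiv> (\<lambda>i k j. if i = d+1 then (x j - xbar x n) / (real (d+1) * real n * S2 x n)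
       else (if k = i then 1 / real n else 0) - xbar x n * ((x j - xbar x n) / (real (d+1) * real n * S2 x n)))"
  shows "(\<Sum>i\<le>d+1. \<Sum>k\<le>d. \<Sum>j\<in>{1..n}. (c i k j)^2)
    \<le> 2 * real (d+1) / real n + 2 * (xbar x n)^2 / (real n * S2 x n) + 1 / (real (d+1) * real n * S2 x n)"
proof -
  define xb where "xb = xbar x n"
  define S' where "S' = S2 x n"
  define D where "D = real (d+1)"
  define den where "den = D * real n * S'"
  have D1: "D \<ge> 1" by (simp add: D_def)
  have Sp: "S' > 0" using S by (simp add: S'_def)
  have np: "real n > 0" using n1 by simp
  have denp: "den > 0" using D1 Sp np by (simp add: den_def)
  note xs = xsums[OF n1, of x, folded xb_def S'_def]
  have sqsum: "(\<Sum>j\<in>{1..n}. ((x j - xb) / den)^2) = real n * S' / den^2"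
    by (simp add: power_divide xs(4) flip: sum_divide_distrib)
  have last: "(\<Sum>k\<le>d. \<Sum>j\<in>{1..n}. (c (d+1) k j)^2) = 1 / den"
  proof -
    have "(\<Sum>k\<le>d. \<Sum>j\<in>{1..n}. (c (d+1) k j)^2) = D * (real n * S' / den^2)"
      using sqsum by (simp add: c_def xb_def[symmetric] S'_def[symmetric] D_def den_def)
    also have "\<dots> = 1 / den" using denp by (simp add: den_def power2_eq_square field_simps)
    finally show ?thesis .
  qed
  have other: "(\<Sum>k\<le>d. \<Sum>j\<in>{1..n}. (c i k j)^2) \<le> 2 / real n + 2 * xb^2 / (D * real n * S')"
    if i: "i \<le> d" for i
  proof -
    have "(\<Sum>k\<le>d. \<Sum>j\<in>{1..n}. (c i k j)^2)
        \<le> (\<Sum>k\<le>d. \<Sum>j\<in>{1..n}. 2 * (if k = i then 1 / real n else 0)^2 + 2 * xb^2 * ((x j - xb) / den)^2)"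
    proof (intro sum_mono)
      fix k j
      have "(a - b)^2 \<le> 2 * a^2 + 2 * b^2" for a b :: real
      proof -
        have "(a - b)^2 + (a + b)^2 = 2 * a^2 + 2 * b^2" by (simp add: power2_eq_square algebra_simps)
        moreover have "(a + b)^2 \<ge> 0" by simp
        ultimately show ?thesis by linarith
      qed
      note ineq = this
      have cdef: "c i k j = (if k = i then 1 / real n else 0) - xb * ((x j - xb) / den)"
        using i unfolding c_def xb_def den_def D_def S'_def by simp
      have "(c i k j)^2 = ((if k = i then 1 / real n else 0) - xb * ((x j - xb) / den))^2"
        by (simp only: cdef)
      also have "\<dots> \<le> 2 * (if k = i then 1 / real n else 0)^2 + 2 * (xb * ((x j - xb) / den))^2"
        by (rule ineq)
      also have "\<dots> = 2 * (if k = i then 1 / real n else 0)^2 + 2 * xb^2 * ((x j - xb) / den)^2"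
        by (simp only: power_mult_distrib mult.assoc)
      finally show "(c i k j)^2 \<le> 2 * (if k = i then 1 / real n else 0)^2 + 2 * xb^2 * ((x j - xb) / den)^2" .
    qed
    also have "\<dots> = (\<Sum>k\<le>d. 2 * (if k = i then 1 / real n else 0)^2 * real n)
        + D * (2 * xb^2 * (real n * S' / den^2))"
    proof -
      have "(\<Sum>k\<le>d. \<Sum>j\<in>{1..n}. 2 * (if k = i then 1 / real n else 0)^2 + 2 * xb^2 * ((x j - xb) / den)^2)
          = (\<Sum>k\<le>d. 2 * (if k = i then 1 / real n else 0)^2 * real n + 2 * xb^2 * (real n * S' / den^2))"
        by (intro sum.cong refl) (simp add: sum.distrib sum_distrib_left[symmetric] sqsum)
      also have "\<dots> = (\<Sum>k\<le>d. 2 * (if k = i then 1 / real n else 0)^2 * real n)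
          + D * (2 * xb^2 * (real n * S' / den^2))"
        by (simp add: sum.distrib D_def)
      finally show ?thesis .
    qed
    also have "(\<Sum>k\<le>d. 2 * (if k = i then 1 / real n else 0)^2 * real n)
        = (\<Sum>k\<le>d. if k = i then 2 / real n else 0)"
      using np by (intro sum.cong refl) (simp add: power2_eq_square)
    also have "\<dots> = 2 / real n" using i by simp
    also have "D * (2 * xb^2 * (real n * S' / den^2)) = 2 * xb^2 / (D * real n * S')"
      using denp D1 Sp np by (simp add: den_def power2_eq_square field_simps)
    finally show ?thesis by simp
  qed
  have "(\<Sum>i\<le>d+1. \<Sum>k\<le>d. \<Sum>j\<in>{1..n}. (c i k j)^2)
      = (\<Sum>i\<le>d. \<Sum>k\<le>d. \<Sum>j\<in>{1..n}. (c i k j)^2) + 1 / den"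
    using sum.atMost_Suc[of "\<lambda>i. \<Sum>k\<le>d. \<Sum>j\<in>{1..n}. (c i k j)^2" d, unfolded Suc_eq_plus1] last
    by simp
  also have "\<dots> \<le> (\<Sum>i\<le>d. 2 / real n + 2 * xb^2 / (D * real n * S')) + 1 / den"
    using other by (intro add_right_mono sum_mono) auto
  also have "(\<Sum>i\<le>d. 2 / real n + 2 * xb^2 / (D * real n * S')) = D * (2 / real n + 2 * xb^2 / (D * real n * S'))"
    by (simp add: D_def)
  also have "D * (2 / real n + 2 * xb^2 / (D * real n * S')) = 2 * D / real n + 2 * xb^2 / (real n * S')"
    using D1 Sp np by (simp add: field_simps)
  finally show ?thesis by (simp add: xb_def S'_def D_def den_def)
qed

lemma final_ineq:
  fixes D n S X nu e :: real
  assumes D: "D \<ge> 1" and n: "n > 0" and S: "S > 0" and X: "X \<ge> 0" and nu: "nu \<ge> 0" and e: "e > 0"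
  shows "nu * (2 * D / n + 2 * X / (n * S) + 1 / (D * n * S)) / e^2
     \<le> 4 * nu / (e^2 * D * n) * (1 + X + S) * (1 / S + D * (1 + X / S))^2"
proof -
  define T where "T = 1 / S + D * (1 + X / S)"
  have T0: "T \<ge> D"
  proof -
    have "X / S \<ge> 0" using X S by simp
    then have "D * (1 + X / S) \<ge> D * 1" using D by (intro mult_left_mono) auto
    moreover have "1 / S > 0" using S by simp
    ultimately show ?thesis unfolding T_def by linarith
  qed
  have Tsq: "T^2 \<ge> D * T" using T0 D by (simp add: power2_eq_square mult_right_mono)
  have F: "2 * D / n + 2 * X / (n * S) + 1 / (D * n * S) \<le> 4 / (D * n) * (D * T)"
  proof -
    have "4 / (D * n) * (D * T) = 4 / (n * S) + 4 * D / n + 4 * D * X / (n * S)"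
      using D n S by (simp add: T_def field_simps)
    moreover have "1 / (D * n * S) \<le> 4 / (n * S)"
      using D n S by (simp add: field_simps)
    moreover have "2 * X / (n * S) \<le> 4 * D * X / (n * S)"
      using D n S X by (intro divide_right_mono) (auto simp: mult_right_mono)
    moreover have "2 * D / n \<le> 4 * D / n" using D n by (simp add: divide_right_mono)
    ultimately show ?thesis by linarith
  qed
  also have "\<dots> \<le> 4 / (D * n) * T^2" using Tsq D n by (intro mult_left_mono) auto
  also have "\<dots> \<le> 4 / (D * n) * ((1 + X + S) * T^2)"
    using D n S X by (intro mult_left_mono) (auto simp: mult_le_cancel_right1)
  finally have "nu * (2 * D / n + 2 * X / (n * S) + 1 / (D * n * S)) \<le> nu * (4 / (D * n) * ((1 + X + S) * T^2))"
    using nu by (intro mult_left_mono) auto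
  then have "nu * (2 * D / n + 2 * X / (n * S) + 1 / (D * n * S)) / e^2 \<le> nu * (4 / (D * n) * ((1 + X + S) * T^2)) / e^2"
    using e by (intro divide_right_mono) auto
  also have "\<dots> = 4 * nu / (e^2 * D * n) * (1 + X + S) * T^2" by (simp add: field_simps)
  finally show ?thesis by (simp add: T_def)
qed



lemma S2_nonneg: "S2 x n \<ge> 0"
  unfolding S2_def by (intro mult_nonneg_nonneg sum_nonneg) auto

lemma S2_pos:
  fixes x :: "nat \<Rightarrow> real"
  assumes n: "n \<ge> 2" and x12: "x 1 \<noteq> x 2"
  shows "S2 x n > 0"
proof (rule ccontr)
  assume "\<not> S2 x n > 0"
  then have "S2 x n = 0" using S2_nonneg[of x n] by linarith
  then have "(\<Sum>j\<in>{1..n}. (x j - xbar x n)^2) = 0" using n unfolding S2_def by simp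
  then have "\<forall>j\<in>{1..n}. (x j - xbar x n)^2 = 0" by (subst sum_nonneg_eq_0_iff[symmetric]) auto
  then have "x 1 = xbar x n" "x 2 = xbar x n" using n by auto
  then show False using x12 by simp
qed

lemma numin_le_numax:
  fixes A :: "nat \<Rightarrow> nat \<Rightarrow> real"
  assumes N: "0 < N" and sym: "\<forall>i<N. \<forall>j<N. A i j = A j i"
  shows "nu_min N A \<le> nu_max N A"
proof -
  obtain lam where l: "is_eigenvalue N A lam" using rayleigh[OF N sym] by blast
  have "nu_min N A \<le> lam" unfolding nu_min_def using l finite_eig by (intro Min_le) auto
  moreover have "lam \<le> nu_max N A" unfolding nu_max_def using l finite_eig by (intro Max_ge) auto
  ultimately show ?thesis by simp
qed

lemma part1:
  fixes M :: "'a measure" and d :: nat and \<beta> :: "nat \<Rightarrow> real" and s :: real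
    and x :: "nat \<Rightarrow> real" and \<delta> :: "nat \<Rightarrow> nat \<Rightarrow> 'a \<Rightarrow> real" and nu_star :: real
  assumes prob: "prob_space M"
    and rv: "\<forall>k\<le>d. \<forall>j\<ge>1. \<delta> k j \<in> borel_measurable M"
    and sq_int: "\<forall>k\<le>d. \<forall>j\<ge>1. integrable M (\<lambda>\<omega>. (\<delta> k j \<omega>)^2)"
    and mean0: "\<forall>k\<le>d. \<forall>j\<ge>1. integrable M (\<delta> k j) \<and> (\<integral>\<omega>. \<delta> k j \<omega> \<partial>M) = 0"
    and Q_inf: "\<exists>c>0. \<forall>n\<ge>1. c \<le> nu_min ((d+1)*n) (cov_matrix M d \<delta>)"
    and Q_bdd: "bdd_above ((\<lambda>n. nu_max ((d+1)*n) (cov_matrix M d \<delta>)) ` {1..})"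
    and nu_star_def: "nu_star = (SUP n\<in>{1..}. nu_max ((d+1)*n) (cov_matrix M d \<delta>))"
    and x12: "x 1 \<noteq> x 2" and n: "n \<ge> 2" and e: "e > 0"
  shows "measure M {\<omega>\<in>space M. pdist d (lse d x (\<lambda>k j. \<beta> k + s * x j + \<delta> k j \<omega>) n)
             (\<lambda>i. if i \<le> d then \<beta> i else if i = d+1 then s else 0) > e}
     \<le> 4 * nu_star / (e^2 * real (d+1) * real n)
               * (1 + (xbar x n)^2 + S2 x n)
               * (1 / S2 x n + real (d+1) * (1 + (xbar x n)^2 / S2 x n))^2"
proof -
  interpret prob_space M by (rule prob)
  have n1: "n \<ge> 1" using n by simp
  have S: "S2 x n > 0" by (rule S2_pos[OF n x12])
  define c where "c = (\<lambda>i k j. if i = d+1 then (x j - xbar x n) / (real (d+1) * real n * S2 x n)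
       else (if k = i then 1 / real n else 0) - xbar x n * ((x j - xbar x n) / (real (d+1) * real n * S2 x n)))"
  define L where "L i \<omega> = (\<Sum>k\<le>d. \<Sum>j\<in>{1..n}. c i k j * \<delta> k j \<omega>)" for i \<omega>
  define Z where "Z \<omega> = (\<Sum>i\<le>d+1. (L i \<omega>)^2)" for \<omega>
  define \<nu> where "\<nu> = nu_max ((d+1)*n) (cov_matrix M d \<delta>)"
  have pd: "pdist d (lse d x (\<lambda>k j. \<beta> k + s * x j + \<delta> k j \<omega>) n)
             (\<lambda>i. if i \<le> d then \<beta> i else if i = d+1 then s else 0) = sqrt (Z \<omega>)" for \<omega>
  proof -
    have "\<forall>i\<in>{..d+1}. (lse d x (\<lambda>k j. \<beta> k + s * x j + \<delta> k j \<omega>) n i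
        - (if i \<le> d then \<beta> i else if i = d+1 then s else 0))^2 = (L i \<omega>)^2"
      using err_repr[OF n S x12, of _ d \<beta> s "\<lambda>k j. \<delta> k j \<omega>"] by (auto simp: L_def c_def)
    then show ?thesis unfolding pdist_def Z_def atLeast0AtMost by (intro arg_cong[where f=sqrt] sum.cong) auto
  qed
  have core_i: "integrable M (\<lambda>\<omega>. (L i \<omega>)^2) \<and> (\<integral>\<omega>. (L i \<omega>)^2 \<partial>M) \<le> \<nu> * (\<Sum>k\<le>d. \<Sum>j\<in>{1..n}. (c i k j)^2)" for i
    unfolding L_def \<nu>_def by (rule core[OF rv sq_int mean0 n1])
  have Zint: "integrable M Z" unfolding Z_def using core_i by auto
  have EZ: "(\<integral>\<omega>. Z \<omega> \<partial>M) \<le> \<nu> * (\<Sum>i\<le>d+1. \<Sum>k\<le>d. \<Sum>j\<in>{1..n}. (c i k j)^2)"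
  proof -
    have "(\<integral>\<omega>. Z \<omega> \<partial>M) = (\<Sum>i\<le>d+1. \<integral>\<omega>. (L i \<omega>)^2 \<partial>M)"
      unfolding Z_def using core_i by (intro Bochner_Integration.integral_sum[where f="\<lambda>i \<omega>. (L i \<omega>)^2" and I="{..d+1}"]) auto
    also have "\<dots> \<le> (\<Sum>i\<le>d+1. \<nu> * (\<Sum>k\<le>d. \<Sum>j\<in>{1..n}. (c i k j)^2))"
      using core_i by (intro sum_mono) auto
    finally show ?thesis by (simp add: sum_distrib_left)
  qed
  have sym: "\<forall>i<(d+1)*n. \<forall>j<(d+1)*n. cov_matrix M d \<delta> i j = cov_matrix M d \<delta> j i"
    by (simp add: cov_matrix_def covar_def mult.commute)
  have Npos: "(d+1)*n > 0" using n1 by simp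
  obtain c0 where c0: "c0 > 0" "\<forall>n\<ge>1. c0 \<le> nu_min ((d+1)*n) (cov_matrix M d \<delta>)" using Q_inf by blast
  have nu_nn: "\<nu> \<ge> 0"
    using c0(1) c0(2)[rule_format, OF n1] numin_le_numax[OF Npos sym] by (simp add: \<nu>_def)
  have nu_le: "\<nu> \<le> nu_star"
    unfolding nu_star_def \<nu>_def using Q_bdd n1 by (intro cSUP_upper) auto
  have cb: "(\<Sum>i\<le>d+1. \<Sum>k\<le>d. \<Sum>j\<in>{1..n}. (c i k j)^2)
    \<le> 2 * real (d+1) / real n + 2 * (xbar x n)^2 / (real n * S2 x n) + 1 / (real (d+1) * real n * S2 x n)"
    unfolding c_def by (rule coef_bound[OF n1 S])
  have Zm: "Z \<in> borel_measurable M"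
  proof -
    have "\<And>k j. k \<le> d \<Longrightarrow> j \<in> {1..n} \<Longrightarrow> \<delta> k j \<in> borel_measurable M" using rv by auto
    then show ?thesis unfolding Z_def L_def by (auto intro!: borel_measurable_sum borel_measurable_power borel_measurable_times)
  qed
  have "measure M {\<omega>\<in>space M. pdist d (lse d x (\<lambda>k j. \<beta> k + s * x j + \<delta> k j \<omega>) n)
             (\<lambda>i. if i \<le> d then \<beta> i else if i = d+1 then s else 0) > e}
      \<le> measure M {\<omega>\<in>space M. Z \<omega> \<ge> e^2}"
  proof (rule finite_measure_mono)
    show "{\<omega>\<in>space M. pdist d (lse d x (\<lambda>k j. \<beta> k + s * x j + \<delta> k j \<omega>) n)
             (\<lambda>i. if i \<le> d then \<beta> i else if i = d+1 then s else 0) > e} \<subseteq> {\<omega>\<in>space M. Z \<omega> \<ge> e^2}"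
    proof clarify
      fix \<omega> assume "\<omega> \<in> space M" and gt: "e < pdist d (lse d x (\<lambda>k j. \<beta> k + s * x j + \<delta> k j \<omega>) n)
             (\<lambda>i. if i \<le> d then \<beta> i else if i = d+1 then s else 0)"
      then have "e < sqrt (Z \<omega>)" by (simp add: pd)
      then have "e^2 < (sqrt (Z \<omega>))^2" using e by (intro power_strict_mono) auto
      moreover have "Z \<omega> \<ge> 0" unfolding Z_def by (intro sum_nonneg) auto
      ultimately show "Z \<omega> \<ge> e^2" by simp
    qed
    show "{\<omega>\<in>space M. Z \<omega> \<ge> e^2} \<in> sets M" using Zm by measurable
  qed
  also have "\<dots> \<le> (\<integral>\<omega>. Z \<omega> \<partial>M) / e^2"
  proof (rule integral_Markov_inequality_measure[OF Zint])
    show "space M \<in> sets M" by simp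
    show "AE x in M. 0 \<le> Z x" unfolding Z_def by (intro AE_I2 sum_nonneg) auto
    show "0 < e^2" using e by simp
  qed
  also have "\<dots> \<le> \<nu> * (2 * real (d+1) / real n + 2 * (xbar x n)^2 / (real n * S2 x n) + 1 / (real (d+1) * real n * S2 x n)) / e^2"
    using EZ cb nu_nn e by (intro divide_right_mono order.trans[OF EZ] mult_left_mono) auto
  also have "\<dots> \<le> nu_star * (2 * real (d+1) / real n + 2 * (xbar x n)^2 / (real n * S2 x n) + 1 / (real (d+1) * real n * S2 x n)) / e^2"
  proof -
    have "0 \<le> 2 * real (d+1) / real n + 2 * (xbar x n)^2 / (real n * S2 x n) + 1 / (real (d+1) * real n * S2 x n)"
      using S n1 by (intro add_nonneg_nonneg) auto
    then show ?thesis using nu_le e by (intro divide_right_mono mult_right_mono) auto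
  qed
  also have "\<dots> \<le> 4 * nu_star / (e^2 * real (d+1) * real n)
               * (1 + (xbar x n)^2 + S2 x n)
               * (1 / S2 x n + real (d+1) * (1 + (xbar x n)^2 / S2 x n))^2"
    using nu_nn nu_le S n1 e by (intro final_ineq) auto
  finally show ?thesis .
qed



lemma S2_nonneg': "S2 x n \<ge> 0"
  unfolding S2_def by (intro mult_nonneg_nonneg sum_nonneg) auto

lemma pointwise_bound:
  fixes rn S X D nu e c1 c2 C g \<gamma> \<mu> :: real
  assumes rn: "rn \<ge> 1" and D: "D \<ge> 1" and nu: "nu \<ge> 0" and e: "e > 0"
    and c1: "c1 > 0" and \<gamma>: "\<gamma> \<ge> 0" and \<mu>: "\<mu> \<ge> 0"
    and S1: "S \<ge> c1 * rn powr \<gamma>" and S2: "S \<le> c2 * rn powr \<gamma>"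
    and X0: "X \<ge> 0" and X: "X \<le> C^2 * rn powr \<mu>"
  shows "4 * nu / (e^2 * D * rn) * (1 + X + S) * (1 / S + D * (1 + X / S))^2
    \<le> (4 * nu / (e^2 * D) * (1 + C^2 + \<bar>c2\<bar>) * (1 / c1 + D + D * C^2 / c1)^2)
       * rn powr (max \<gamma> \<mu> + 2 * max 0 (\<mu> - \<gamma>) - 1)"
proof -
  define m where "m = max \<gamma> \<mu>"
  define \<rho> where "\<rho> = max 0 (\<mu> - \<gamma>)"
  have rn0: "rn > 0" using rn by simp
  have g0: "rn powr \<gamma> > 0" using rn0 by simp
  have Sp: "S > 0" using S1 c1 g0 by (smt (verit) mult_pos_pos)
  have pm: "rn powr a \<le> rn powr b" if "a \<le> b" for a b by (rule powr_mono[OF that rn])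
  have one_m: "1 \<le> rn powr m" using pm[of 0 m] \<gamma> rn0 by (simp add: m_def)
  have one_r: "1 \<le> rn powr \<rho>" using pm[of 0 \<rho>] rn0 by (simp add: \<rho>_def)
  have A: "1 + X + S \<le> (1 + C^2 + \<bar>c2\<bar>) * rn powr m"
  proof -
    have "X \<le> C^2 * rn powr m" using X pm[of \<mu> m] by (intro order.trans[OF X] mult_left_mono) (auto simp: m_def)
    moreover have "S \<le> \<bar>c2\<bar> * rn powr m"
    proof -
      have "S \<le> \<bar>c2\<bar> * rn powr \<gamma>" using S2 g0 by (smt (verit) abs_ge_self mult_right_mono)
      also have "\<dots> \<le> \<bar>c2\<bar> * rn powr m" using pm[of \<gamma> m] by (intro mult_left_mono) (auto simp: m_def)
      finally show ?thesis .
    qed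
    ultimately show ?thesis using one_m by (simp add: algebra_simps)
  qed
  have invS: "1 / S \<le> (1 / c1) * rn powr (- \<gamma>)"
  proof -
    have "1 / S \<le> 1 / (c1 * rn powr \<gamma>)" using S1 c1 g0 Sp by (intro divide_left_mono) auto
    also have "\<dots> = (1 / c1) * rn powr (- \<gamma>)" using rn0 by (simp add: powr_minus divide_inverse)
    finally show ?thesis .
  qed
  have XS: "X / S \<le> (C^2 / c1) * rn powr (\<mu> - \<gamma>)"
  proof -
    have "X / S \<le> (C^2 * rn powr \<mu>) / S" using X Sp by (intro divide_right_mono) auto
    also have "\<dots> = (C^2 * rn powr \<mu>) * (1 / S)" by simp
    also have "\<dots> \<le> (C^2 * rn powr \<mu>) * ((1 / c1) * rn powr (- \<gamma>))"
      using invS by (intro mult_left_mono) auto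
    also have "\<dots> = (C^2 / c1) * (rn powr \<mu> * rn powr (- \<gamma>))" by simp
    also have "rn powr \<mu> * rn powr (- \<gamma>) = rn powr (\<mu> - \<gamma>)" by (simp add: powr_add[symmetric])
    finally show ?thesis .
  qed
  define T where "T = 1 / S + D * (1 + X / S)"
  have T0: "T \<ge> 0" using Sp X0 D by (simp add: T_def)
  have T: "T \<le> (1 / c1 + D + D * C^2 / c1) * rn powr \<rho>"
  proof -
    have a: "(1 / c1) * rn powr (- \<gamma>) \<le> (1 / c1) * rn powr \<rho>"
      using pm[of "-\<gamma>" \<rho>] \<gamma> c1 by (intro mult_left_mono) (auto simp: \<rho>_def)
    have b: "D * (C^2 / c1) * rn powr (\<mu> - \<gamma>) \<le> D * (C^2 / c1) * rn powr \<rho>"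
      using pm[of "\<mu> - \<gamma>" \<rho>] c1 D by (intro mult_left_mono) (auto simp: \<rho>_def)
    have c: "D \<le> D * rn powr \<rho>" using one_r D by simp
    have "T = 1 / S + D + D * (X / S)" by (simp add: T_def algebra_simps)
    also have "\<dots> \<le> (1 / c1) * rn powr (- \<gamma>) + D + D * ((C^2 / c1) * rn powr (\<mu> - \<gamma>))"
      using invS XS D by (intro add_mono mult_left_mono) auto
    also have "\<dots> \<le> (1 / c1) * rn powr \<rho> + D * rn powr \<rho> + D * (C^2 / c1) * rn powr \<rho>"
      using a b c by (simp add: mult.assoc)
    also have "\<dots> = (1 / c1 + D + D * C^2 / c1) * rn powr \<rho>" by (simp add: algebra_simps)
    finally show ?thesis .
  qed
  have T2: "T^2 \<le> (1 / c1 + D + D * C^2 / c1)^2 * rn powr (2 * \<rho>)"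
  proof -
    have "T^2 \<le> ((1 / c1 + D + D * C^2 / c1) * rn powr \<rho>)^2" using T T0 by (intro power_mono) auto
    also have "\<dots> = (1 / c1 + D + D * C^2 / c1)^2 * rn powr (2 * \<rho>)"
      using rn0 by (simp add: power_mult_distrib powr_add[symmetric] power2_eq_square)
    finally show ?thesis .
  qed
  define K0 where "K0 = 4 * nu / (e^2 * D)"
  have K0: "K0 \<ge> 0" using nu e D by (simp add: K0_def)
  have "4 * nu / (e^2 * D * rn) * (1 + X + S) * T^2 = K0 * rn powr (-1) * ((1 + X + S) * T^2)"
    using rn0 by (simp add: K0_def powr_minus divide_inverse)
  also have "\<dots> \<le> K0 * rn powr (-1) * (((1 + C^2 + \<bar>c2\<bar>) * rn powr m) * ((1 / c1 + D + D * C^2 / c1)^2 * rn powr (2 * \<rho>)))"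
    using A T2 K0 X0 Sp by (intro mult_left_mono mult_mono) auto
  also have "\<dots> = (K0 * (1 + C^2 + \<bar>c2\<bar>) * (1 / c1 + D + D * C^2 / c1)^2) * (rn powr (-1) * rn powr m * rn powr (2 * \<rho>))"
    by (simp add: algebra_simps)
  also have "rn powr (-1) * rn powr m * rn powr (2 * \<rho>) = rn powr (m + 2 * \<rho> - 1)"
    by (simp only: powr_add[symmetric], rule arg_cong[where f="(powr) rn"], simp)
  finally show ?thesis by (simp add: T_def K0_def m_def \<rho>_def)
qed

lemma part2:
  fixes P :: "nat \<Rightarrow> real" and x :: "nat \<Rightarrow> real" and nu e D \<gamma> \<mu> :: real
  assumes bound: "\<forall>n\<ge>2. P n \<le> 4 * nu / (e^2 * D * real n) * (1 + (xbar x n)^2 + S2 x n)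
                   * (1 / S2 x n + D * (1 + (xbar x n)^2 / S2 x n))^2"
    and Pnn: "\<forall>n. P n \<ge> 0" and nu: "nu \<ge> 0" and e: "e > 0" and D: "D \<ge> 1"
    and \<gamma>: "\<gamma> \<ge> 0" and \<mu>: "\<mu> \<ge> 0"
    and th: "S2 x \<in> \<Theta>(\<lambda>n. real n powr \<gamma>)" and xo: "xbar x \<in> O(\<lambda>n. real n powr (\<mu>/2))"
  shows "P \<in> O(\<lambda>n. real n powr (-(1 - max \<gamma> \<mu> - 2 * max 0 (\<mu> - \<gamma>))))"
proof -
  obtain c1 where c1: "c1 > 0" "eventually (\<lambda>n. norm (S2 x n) \<ge> c1 * norm (real n powr \<gamma>)) at_top"
    using bigthetaD2[OF th] by (elim landau_omega.bigE) auto
  obtain c2 where c2: "eventually (\<lambda>n. norm (S2 x n) \<le> c2 * norm (real n powr \<gamma>)) at_top"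
    using bigthetaD1[OF th] by (elim landau_o.bigE) auto
  obtain C where C: "eventually (\<lambda>n. norm (xbar x n) \<le> C * norm (real n powr (\<mu>/2))) at_top"
    using xo by (elim landau_o.bigE) auto
  define K where "K = 4 * nu / (e^2 * D) * (1 + C^2 + \<bar>c2\<bar>) * (1 / c1 + D + D * C^2 / c1)^2"
  have ev: "eventually (\<lambda>n. norm (P n) \<le> K * norm (real n powr (-(1 - max \<gamma> \<mu> - 2 * max 0 (\<mu> - \<gamma>))))) at_top"
    using c1(2) c2 C eventually_ge_at_top[of "2::nat"]
  proof eventually_elim
    case (elim n)
    have rn: "real n \<ge> 1" using elim(4) by simp
    have S2n: "S2 x n \<ge> 0" by (rule S2_nonneg')
    have S1: "S2 x n \<ge> c1 * real n powr \<gamma>" using elim(1) S2n by simp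
    have S2: "S2 x n \<le> c2 * real n powr \<gamma>" using elim(2) S2n by simp
    have xb: "\<bar>xbar x n\<bar> \<le> C * real n powr (\<mu>/2)" using elim(3) by simp
    have X: "(xbar x n)^2 \<le> C^2 * real n powr \<mu>"
    proof -
      have "(xbar x n)^2 = \<bar>xbar x n\<bar>^2" by simp
      also have "\<dots> \<le> (C * real n powr (\<mu>/2))^2" using xb by (intro power_mono) auto
      also have "\<dots> = C^2 * real n powr \<mu>"
        using rn by (simp add: power_mult_distrib power2_eq_square powr_add[symmetric])
      finally show ?thesis .
    qed
    have "P n \<le> 4 * nu / (e^2 * D * real n) * (1 + (xbar x n)^2 + S2 x n)
                   * (1 / S2 x n + D * (1 + (xbar x n)^2 / S2 x n))^2"
      using bound elim(4) by auto
    also have "\<dots> \<le> K * real n powr (max \<gamma> \<mu> + 2 * max 0 (\<mu> - \<gamma>) - 1)"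
      unfolding K_def by (rule pointwise_bound[OF rn D nu e c1(1) \<gamma> \<mu> S1 S2 _ X]) simp
    also have "max \<gamma> \<mu> + 2 * max 0 (\<mu> - \<gamma>) - 1 = -(1 - max \<gamma> \<mu> - 2 * max 0 (\<mu> - \<gamma>))" by simp
    finally have "P n \<le> K * real n powr (-(1 - max \<gamma> \<mu> - 2 * max 0 (\<mu> - \<gamma>)))" .
    then show ?case using Pnn by simp
  qed
  then show ?thesis by (rule bigoI)
qed



theorem mainTheorem5:
  fixes M :: "'a measure" and d :: nat and \<beta> :: "nat \<Rightarrow> real" and s :: real
    and eps :: "nat \<Rightarrow> real" and \<delta> :: "nat \<Rightarrow> nat \<Rightarrow> 'a \<Rightarrow> real" and nu_star :: real
  assumes prob: "prob_space M"
    and eps_pos: "\<forall>j\<ge>1. eps j > 0"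
    and eps_decr: "\<forall>i j. 1 \<le> i \<longrightarrow> i < j \<longrightarrow> eps j < eps i"
    and rv: "\<forall>k\<le>d. \<forall>j\<ge>1. \<delta> k j \<in> borel_measurable M"
    and sq_int: "\<forall>k\<le>d. \<forall>j\<ge>1. integrable M (\<lambda>\<omega>. (\<delta> k j \<omega>)^2)"
    and mean0: "\<forall>k\<le>d. \<forall>j\<ge>1. integrable M (\<delta> k j) \<and> (\<integral>\<omega>. \<delta> k j \<omega> \<partial>M) = 0"
    and var_pos: "\<forall>k\<le>d. \<forall>j\<ge>1. covar M (\<delta> k j) (\<delta> k j) > 0"
    and Q_inf: "\<exists>c>0. \<forall>n\<ge>1. c \<le> nu_min ((d+1)*n) (cov_matrix M d \<delta>)"
    and Q_bdd: "bdd_above ((\<lambda>n. nu_max ((d+1)*n) (cov_matrix M d \<delta>)) ` {1..})"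
    and nu_star_def: "nu_star = (SUP n\<in>{1..}. nu_max ((d+1)*n) (cov_matrix M d \<delta>))"
  defines "x \<equiv> (\<lambda>j. - ln (eps j))"
    and "y \<equiv> (\<lambda>\<omega> k j. \<beta> k + s * (- ln (eps j)) + \<delta> k j \<omega>)"
    and "\<beta>vec \<equiv> (\<lambda>i. if i \<le> d then \<beta> i else if i = d+1 then s else 0)"
  shows "(\<forall>e>0. \<forall>n\<ge>2.
            measure M {\<omega>\<in>space M. pdist d (lse d x (y \<omega>) n) \<beta>vec > e}
            \<le> 4 * nu_star / (e^2 * real (d+1) * real n)
               * (1 + (xbar x n)^2 + S2 x n)
               * (1 / S2 x n + real (d+1) * (1 + (xbar x n)^2 / S2 x n))^2)
       \<and> (\<forall>\<gamma> \<mu>::real. \<gamma> \<ge> 0 \<longrightarrow> \<mu> \<ge> 0 \<longrightarrow>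
            S2 x \<in> \<Theta>(\<lambda>n. real n powr \<gamma>) \<longrightarrow>
            xbar x \<in> O(\<lambda>n. real n powr (\<mu>/2)) \<longrightarrow>
            1 - max \<gamma> \<mu> - 2 * max 0 (\<mu> - \<gamma>) > 0 \<longrightarrow>
            (\<forall>e>0. (\<lambda>n. measure M {\<omega>\<in>space M. pdist d (lse d x (y \<omega>) n) \<beta>vec > e})
                     \<in> O(\<lambda>n. real n powr (-(1 - max \<gamma> \<mu> - 2 * max 0 (\<mu> - \<gamma>))))))"
proof -
  have x12: "x 1 \<noteq> x 2"
  proof -
    have "eps 2 < eps 1" using eps_decr by auto
    moreover have "eps 2 > 0" using eps_pos by auto
    ultimately have "ln (eps 2) < ln (eps 1)" by simp
    then show ?thesis by (simp add: x_def)
  qed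
  have yeq: "y \<omega> = (\<lambda>k j. \<beta> k + s * x j + \<delta> k j \<omega>)" for \<omega> by (simp add: y_def x_def)
  have bv: "\<beta>vec = (\<lambda>i. if i \<le> d then \<beta> i else if i = d+1 then s else 0)" by (simp add: \<beta>vec_def)
  have P1: "\<forall>e>0. \<forall>n\<ge>2.
            measure M {\<omega>\<in>space M. pdist d (lse d x (y \<omega>) n) \<beta>vec > e}
            \<le> 4 * nu_star / (e^2 * real (d+1) * real n)
               * (1 + (xbar x n)^2 + S2 x n)
               * (1 / S2 x n + real (d+1) * (1 + (xbar x n)^2 / S2 x n))^2"
  proof (intro allI impI)
    fix e :: real and n :: nat assume e: "e > 0" and n: "n \<ge> 2"
    show "measure M {\<omega>\<in>space M. pdist d (lse d x (y \<omega>) n) \<beta>vec > e}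
            \<le> 4 * nu_star / (e^2 * real (d+1) * real n)
               * (1 + (xbar x n)^2 + S2 x n)
               * (1 / S2 x n + real (d+1) * (1 + (xbar x n)^2 / S2 x n))^2"
      unfolding yeq bv by (rule part1[OF prob rv sq_int mean0 Q_inf Q_bdd nu_star_def x12 n e])
  qed
  have nu_nn: "nu_star \<ge> 0"
  proof -
    obtain c0 where c0: "c0 > 0" "\<forall>n\<ge>1. c0 \<le> nu_min ((d+1)*n) (cov_matrix M d \<delta>)" using Q_inf by blast
    have sym: "\<forall>i<(d+1)*1. \<forall>j<(d+1)*1. cov_matrix M d \<delta> i j = cov_matrix M d \<delta> j i"
      by (simp add: cov_matrix_def covar_def mult.commute)
    have "nu_min ((d+1)*1) (cov_matrix M d \<delta>) \<le> nu_max ((d+1)*1) (cov_matrix M d \<delta>)"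
      by (rule numin_le_numax[OF _ sym]) simp
    moreover have "nu_max ((d+1)*1) (cov_matrix M d \<delta>) \<le> nu_star"
      unfolding nu_star_def using Q_bdd by (intro cSUP_upper) auto
    ultimately show ?thesis using c0 by force
  qed
  have P2: "\<forall>\<gamma> \<mu>::real. \<gamma> \<ge> 0 \<longrightarrow> \<mu> \<ge> 0 \<longrightarrow>
            S2 x \<in> \<Theta>(\<lambda>n. real n powr \<gamma>) \<longrightarrow>
            xbar x \<in> O(\<lambda>n. real n powr (\<mu>/2)) \<longrightarrow>
            1 - max \<gamma> \<mu> - 2 * max 0 (\<mu> - \<gamma>) > 0 \<longrightarrow>
            (\<forall>e>0. (\<lambda>n. measure M {\<omega>\<in>space M. pdist d (lse d x (y \<omega>) n) \<beta>vec > e})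
                     \<in> O(\<lambda>n. real n powr (-(1 - max \<gamma> \<mu> - 2 * max 0 (\<mu> - \<gamma>)))))"
  proof (intro allI impI)
    fix \<gamma> \<mu> :: real and e :: real
    assume g: "\<gamma> \<ge> 0" and m: "\<mu> \<ge> 0" and th: "S2 x \<in> \<Theta>(\<lambda>n. real n powr \<gamma>)"
      and xo: "xbar x \<in> O(\<lambda>n. real n powr (\<mu>/2))" and e: "e > 0"
    show "(\<lambda>n. measure M {\<omega>\<in>space M. pdist d (lse d x (y \<omega>) n) \<beta>vec > e})
                     \<in> O(\<lambda>n. real n powr (-(1 - max \<gamma> \<mu> - 2 * max 0 (\<mu> - \<gamma>))))"
    proof (rule part2[where nu=nu_star and e=e and D="real (d+1)" and x=x])
      show "\<forall>n\<ge>2. measure M {\<omega>\<in>space M. pdist d (lse d x (y \<omega>) n) \<beta>vec > e}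
          \<le> 4 * nu_star / (e^2 * real (d+1) * real n) * (1 + (xbar x n)^2 + S2 x n)
                   * (1 / S2 x n + real (d+1) * (1 + (xbar x n)^2 / S2 x n))^2"
        using P1 e by blast
    qed (use nu_nn e g m th xo in auto)
  qed
  show ?thesis using P1 P2 by blast
qed


end
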